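(* For each of the three cases $d=2,4,8$ (the manifold of flags in the projective plane over $\mathbb C$, $\mathbb H$, $\mathbb O$), there exists a $G$-invariant metric on $M=G/K$ with positive definite Ricci tensor whose Ricci flow reaches, at some later time, a $G$-invariant metric whose Ricci tensor has signature $(d,2d)$, i.e. it has $d$ negative and $2d$ positive eigenvalues.
   Context: Let $(G,K,d)$ be one of the following three triples: - $(SU(3),T^2,2)$, with $T^2$ a maximal torus; - $(Sp(3),Sp(1)\times Sp(1)\times Sp(1),4)$; - (compact $F_4$, $Spin(8)$, $8$). Let $M=G/K$, a manifold of dimension $3d$. With the $\mathrm{Ad}(G)$-invariant inner product $\langle X,Y\rangle_0=-\tfrac12\mathrm{Re}\,\mathrm{tr}(XY)$ (for $F_4$, the invariant inner product agreeing with it on a compatibly embedded $Sp(3)$), let $\mathfrak p=\mathfrak k^\perp=V_1\oplus V_2\oplus V_3$ be the decomposition into three pairwise inequivalent irreducible $\mathrm{Ad}(K)$-invariant subspaces of dimension $d$. $G$-invariant metrics are $g\leftrightarrow(x_1,x_2,x_3)$, corresponding to $\sum_i x_i\langle\cdot,\cdot\rangle_0|_{V_i}$ with $x_i>0$. Their Ricci tensor is $\sum_i x_ir_i\langle\cdot,\cdot\rangle_0|_{V_i}$, where $$r_i=\frac{d x_i^2-d x_j^2-d x_k^2+(10d-8)x_jx_k}{2x_1x_2x_3},\qquad\{i,j,k\}=\{1,2,3\}.$$ The Ricci flow $\partial_tg=-2\mathrm{Ric}(g)$ on these metrics is the ODE system $\frac{dx_i}{dt}=-2r_ix_i$. *)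

theory Defs
  imports Complex_Main
begin

text \<open>Invariant metric g = (x1,x2,x3), i.e. sum x_i <.,.>_0 restricted to V_i, dim V_i = d.
  ric d a b c is r_i with x_i = a and {x_j,x_k} = {b,c} (symmetric in b,c).\<close>
definition ric :: "nat \<Rightarrow> real \<Rightarrow> real \<Rightarrow> real \<Rightarrow> real" where
  "ric d a b c = (real d * a^2 - real d * b^2 - real d * c^2 + (10 * real d - 8) * b * c)
                  / (2 * a * b * c)"

text \<open>Coefficients of the Ricci tensor w.r.t. <.,.>_0 on V_1, V_2, V_3:
  Ric = sum x_i r_i <.,.>_0|V_i.\<close>
definition ricci_coeffs :: "nat \<Rightarrow> real \<Rightarrow> real \<Rightarrow> real \<Rightarrow> real list" where
  "ricci_coeffs d x1 x2 x3 = [x1 * ric d x1 x2 x3, x2 * ric d x2 x1 x3, x3 * ric d x3 x1 x2]"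

definition ricci_pos_def :: "nat \<Rightarrow> real \<Rightarrow> real \<Rightarrow> real \<Rightarrow> bool" where
  "ricci_pos_def d x1 x2 x3 = (\<forall>c \<in> set (ricci_coeffs d x1 x2 x3). c > 0)"

text \<open>Signature (number of negative, number of positive eigenvalues) of the Ricci tensor:
  each block V_i has dimension d, on which Ric is a multiple of the inner product.\<close>
definition ricci_signature :: "nat \<Rightarrow> real \<Rightarrow> real \<Rightarrow> real \<Rightarrow> nat \<times> nat" where
  "ricci_signature d x1 x2 x3 =
     (d * length (filter (\<lambda>c. c < 0) (ricci_coeffs d x1 x2 x3)),
      d * length (filter (\<lambda>c. c > 0) (ricci_coeffs d x1 x2 x3)))"

definition ricci_flow_sol ::
  "nat \<Rightarrow> (real \<Rightarrow> real) \<Rightarrow> (real \<Rightarrow> real) \<Rightarrow> (real \<Rightarrow> real) \<Rightarrow> real \<Rightarrow> bool" where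
  "ricci_flow_sol d x1 x2 x3 T =
     (\<forall>t \<in> {0..T}. x1 t > 0 \<and> x2 t > 0 \<and> x3 t > 0 \<and>
        (x1 has_real_derivative (-2 * ric d (x1 t) (x2 t) (x3 t) * x1 t)) (at t within {0..T}) \<and>
        (x2 has_real_derivative (-2 * ric d (x2 t) (x1 t) (x3 t) * x2 t)) (at t within {0..T}) \<and>
        (x3 has_real_derivative (-2 * ric d (x3 t) (x1 t) (x2 t) * x3 t)) (at t within {0..T}))"

end

theory Submission
  imports Defs "HOL-Analysis.Analysis"
begin


lemma picard:
  fixes G :: "'a::euclidean_space \<Rightarrow> 'a"
  assumes lip: "L-lipschitz_on UNIV G" and h: "h > 0" "4*h*L < 1"
  shows "\<exists>y. y 0 = p \<and> (\<forall>t\<in>{-h..h}. (y has_vector_derivative G (y t)) (at t within {-h..h}))"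
proof -
  have L0: "L \<ge> 0" using lip lipschitz_on_nonneg by blast
  have contG: "continuous_on UNIV G" using lip lipschitz_on_continuous_on by blast
  define c where "c t = max (-h) (min h t)" for t
  have c_in: "c t \<in> {-h..h}" for t using h by (auto simp: c_def)
  have c_id: "t \<in> {-h..h} \<Longrightarrow> c t = t" for t by (auto simp: c_def)
  have contc: "continuous_on UNIV c" unfolding c_def by (intro continuous_intros)
  define I where "I y u = integral {-h..u} (\<lambda>s. G (apply_bcontfun y s))" for y :: "real \<Rightarrow>\<^sub>C 'a" and u
  have contGy: "continuous_on A (\<lambda>s. G (apply_bcontfun y s))" for y :: "real \<Rightarrow>\<^sub>C 'a" and A
    by (rule continuous_on_compose2[OF contG]) auto
  have derI: "((I y) has_vector_derivative G (apply_bcontfun y u)) (at u within {-h..h})"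
    if "u \<in> {-h..h}" for y u
    unfolding I_def by (rule integral_has_vector_derivative[OF contGy that])
  have contI: "continuous_on {-h..h} (I y)" for y
    using derI has_vector_derivative_continuous continuous_on_eq_continuous_within by blast
  define \<phi> where "\<phi> y t = p + I y (c t) - I y 0" for y t
  have phib: "\<phi> y \<in> bcontfun" for y
  proof -
    have ci: "continuous_on UNIV (\<lambda>t. I y (c t))"
      by (rule continuous_on_compose2[OF contI contc]) (use c_in in auto)
    have "compact (I y ` {-h..h})" by (rule compact_continuous_image[OF contI]) auto
    then obtain B where B: "\<And>z. z \<in> I y ` {-h..h} \<Longrightarrow> norm z \<le> B"
      using compact_imp_bounded bounded_iff by metis
    show ?thesis
    proof (rule bcontfun_normI)
      show "continuous_on UNIV (\<phi> y)" unfolding \<phi>_def by (intro continuous_intros ci)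
      fix t
      have "norm (\<phi> y t) \<le> norm p + norm (I y (c t)) + norm (I y 0)"
        unfolding \<phi>_def using norm_triangle_ineq4[of "p + I y (c t)" "I y 0"] norm_triangle_ineq[of p "I y (c t)"]
        by linarith
      also have "\<dots> \<le> norm p + B + B" using B c_in h by (intro add_mono) auto
      finally show "norm (\<phi> y t) \<le> norm p + B + B" .
    qed
  qed
  define \<Phi> where "\<Phi> y = Bcontfun (\<phi> y)" for y
  have Phi_app: "apply_bcontfun (\<Phi> y) t = \<phi> y t" for y t
    unfolding \<Phi>_def using phib Bcontfun_inverse by metis
  have contr: "dist (\<Phi> y) (\<Phi> z) \<le> (4*h*L) * dist y z" for y z
  proof (rule dist_bound)
    fix t
    have Id: "norm (I y u - I z u) \<le> (2*h*L) * dist y z" if u: "u \<in> {-h..h}" for u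
    proof -
      have "I y u - I z u = integral {-h..u} (\<lambda>s. G (apply_bcontfun y s) - G (apply_bcontfun z s))"
        unfolding I_def
        by (rule integral_diff[symmetric]; rule integrable_continuous_interval; rule contGy)
      also have "norm \<dots> \<le> (L * dist y z) * (u - -h)"
      proof (rule integral_bound)
        show "-h \<le> u" using u by auto
        show "continuous_on {-h..u} (\<lambda>s. G (apply_bcontfun y s) - G (apply_bcontfun z s))"
          by (intro continuous_intros contGy)
        fix s
        have "norm (G (apply_bcontfun y s) - G (apply_bcontfun z s)) = dist (G (apply_bcontfun y s)) (G (apply_bcontfun z s))"
          by (simp add: dist_norm)
        also have "\<dots> \<le> L * dist (apply_bcontfun y s) (apply_bcontfun z s)"
          using lip by (auto dest: lipschitz_onD)
        also have "\<dots> \<le> L * dist y z" using L0 dist_bounded by (intro mult_left_mono) auto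
        finally show "norm (G (apply_bcontfun y s) - G (apply_bcontfun z s)) \<le> L * dist y z" .
      qed
      also have "\<dots> \<le> (L * dist y z) * (2*h)" using u L0 by (intro mult_left_mono) auto
      finally show ?thesis by (simp add: algebra_simps)
    qed
    have "dist (apply_bcontfun (\<Phi> y) t) (apply_bcontfun (\<Phi> z) t)
          = norm ((I y (c t) - I z (c t)) - (I y 0 - I z 0))"
      unfolding Phi_app \<phi>_def dist_norm by (simp add: algebra_simps)
    also have "\<dots> \<le> norm (I y (c t) - I z (c t)) + norm (I y 0 - I z 0)" by (rule norm_triangle_ineq4)
    also have "\<dots> \<le> (2*h*L) * dist y z + (2*h*L) * dist y z"
      using Id c_in h by (intro add_mono) auto
    finally show "dist (apply_bcontfun (\<Phi> y) t) (apply_bcontfun (\<Phi> z) t) \<le> (4*h*L) * dist y z"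
      by (simp add: algebra_simps)
  qed
  obtain y where fixy: "\<Phi> y = y"
    using banach_fix_type[of "4*h*L" \<Phi>] contr h L0 by auto
  have yeq: "apply_bcontfun y t = \<phi> y t" for t using fixy Phi_app by metis
  show ?thesis
  proof (intro exI conjI ballI)
    show "apply_bcontfun y 0 = p" using yeq[of 0] h by (simp add: \<phi>_def c_id)
    fix t assume t: "t \<in> {-h..h}"
    have "((\<lambda>u. p + I y u - I y 0) has_vector_derivative G (apply_bcontfun y t)) (at t within {-h..h})"
      using derI[OF t] by (auto intro!: derivative_eq_intros)
    then show "(apply_bcontfun y has_vector_derivative G (apply_bcontfun y t)) (at t within {-h..h})"
      by (rule has_vector_derivative_transform[OF t, rotated]) (simp add: yeq \<phi>_def c_id)
  qed
qed



definition good :: "('v::metric_space \<Rightarrow> real) \<Rightarrow> bool" where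
  "good f \<longleftrightarrow> (\<exists>L. L-lipschitz_on UNIV f) \<and> (\<exists>B. \<forall>x. \<bar>f x\<bar> \<le> B)"

lemma good_const: "good (\<lambda>x. c)"
  unfolding good_def using lipschitz_on_constant by blast

lemma good_add: assumes "good f" "good g" shows "good (\<lambda>x. f x + g x)"
proof -
  obtain Lf Bf Lg Bg where f: "Lf-lipschitz_on UNIV f" "\<And>x. \<bar>f x\<bar> \<le> Bf"
    and g: "Lg-lipschitz_on UNIV g" "\<And>x. \<bar>g x\<bar> \<le> Bg"
    using assms unfolding good_def by blast
  have "(Lf+Lg)-lipschitz_on UNIV (\<lambda>x. f x + g x)" by (rule lipschitz_on_add[OF f(1) g(1)])
  moreover have "\<bar>f x + g x\<bar> \<le> Bf + Bg" for x using f(2)[of x] g(2)[of x] by linarith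
  ultimately show ?thesis unfolding good_def by blast
qed

lemma good_uminus: assumes "good f" shows "good (\<lambda>x. - f x)"
proof -
  obtain Lf Bf where f: "Lf-lipschitz_on UNIV f" "\<And>x. \<bar>f x\<bar> \<le> Bf"
    using assms unfolding good_def by blast
  have "Lf-lipschitz_on UNIV (\<lambda>x. - f x)" using f(1) by simp
  moreover have "\<bar>- f x\<bar> \<le> Bf" for x using f(2)[of x] by simp
  ultimately show ?thesis unfolding good_def by blast
qed

lemma good_diff: "good f \<Longrightarrow> good g \<Longrightarrow> good (\<lambda>x. f x - g x)"
  using good_add[of f "\<lambda>x. - g x"] good_uminus[of g] by simp

lemma good_mult: assumes "good f" "good g" shows "good (\<lambda>x. f x * g x)"
proof -
  obtain Lf Bf Lg Bg where f: "Lf-lipschitz_on UNIV f" "\<And>x. \<bar>f x\<bar> \<le> Bf"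
    and g: "Lg-lipschitz_on UNIV g" "\<And>x. \<bar>g x\<bar> \<le> Bg"
    using assms unfolding good_def by blast
  have Lf0: "Lf \<ge> 0" and Lg0: "Lg \<ge> 0" using f g lipschitz_on_nonneg by blast+
  have Bf0: "Bf \<ge> 0" using f(2)[of undefined] by linarith
  have Bg0: "Bg \<ge> 0" using g(2)[of undefined] by linarith
  have "(Bf*Lg + Bg*Lf)-lipschitz_on UNIV (\<lambda>x. f x * g x)"
  proof (rule lipschitz_onI)
    fix x y
    have "dist (f x * g x) (f y * g y) = \<bar>f x * (g x - g y) + g y * (f x - f y)\<bar>"
      by (simp add: dist_real_def algebra_simps)
    also have "\<dots> \<le> \<bar>f x\<bar> * \<bar>g x - g y\<bar> + \<bar>g y\<bar> * \<bar>f x - f y\<bar>"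
      by (metis abs_mult abs_triangle_ineq)
    also have "\<dots> \<le> Bf * (Lg * dist x y) + Bg * (Lf * dist x y)"
      using f g lipschitz_onD[OF f(1), of x y] lipschitz_onD[OF g(1), of x y] Bf0 Bg0
      by (intro add_mono mult_mono) (auto simp: dist_real_def)
    finally show "dist (f x * g x) (f y * g y) \<le> (Bf*Lg + Bg*Lf) * dist x y"
      by (simp add: algebra_simps)
  qed (use Lf0 Lg0 Bf0 Bg0 in auto)
  moreover have "\<bar>f x * g x\<bar> \<le> Bf * Bg" for x
    using f(2)[of x] g(2)[of x] by (simp add: abs_mult mult_mono)
  ultimately show ?thesis unfolding good_def by blast
qed

lemma good_inverse: assumes "good f" "a > 0" "\<And>x. f x \<ge> a" shows "good (\<lambda>x. inverse (f x))"
proof -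
  obtain L where f: "L-lipschitz_on UNIV f"
    using assms unfolding good_def by blast
  have L0: "L \<ge> 0" using f lipschitz_on_nonneg by blast
  have "(L / a^2)-lipschitz_on UNIV (\<lambda>x. inverse (f x))"
  proof (rule lipschitz_onI)
    fix x y
    have fx: "f x \<ge> a" "f y \<ge> a" using assms by auto
    have pos: "f x > 0" "f y > 0" using fx(1) fx(2) assms(2) by linarith+
    have "dist (inverse (f x)) (inverse (f y)) = \<bar>f y - f x\<bar> / (f x * f y)"
      using pos by (simp add: dist_real_def field_simps abs_div)
    also have "\<dots> \<le> \<bar>f y - f x\<bar> / (a * a)"
      using pos fx assms by (intro divide_left_mono mult_mono) (use pos in auto)
    also have "\<dots> \<le> (L * dist x y) / (a*a)"
      using lipschitz_onD[OF f, of x y] assms by (intro divide_right_mono) (auto simp: dist_real_def abs_minus_commute)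
    finally show "dist (inverse (f x)) (inverse (f y)) \<le> L / a^2 * dist x y"
      by (simp add: power2_eq_square)
  qed (use L0 assms in auto)
  moreover have "\<bar>inverse (f x)\<bar> \<le> inverse a" for x
    using assms(2) assms(3)[of x] by (simp add: le_imp_inverse_le)
  ultimately show ?thesis unfolding good_def by blast
qed

definition cl :: "real \<Rightarrow> real \<Rightarrow> real \<Rightarrow> real" where "cl a b s = max a (min b s)"

lemma good_cl: assumes "1-lipschitz_on UNIV (p :: 'v::metric_space \<Rightarrow> real)" "a \<le> b"
  shows "good (\<lambda>x. cl a b (p x))"
proof -
  have "1-lipschitz_on UNIV (\<lambda>x. cl a b (p x))"
  proof (rule lipschitz_onI)
    fix x y
    have "dist (cl a b (p x)) (cl a b (p y)) \<le> dist (p x) (p y)"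
      unfolding cl_def dist_real_def by auto
    then show "dist (cl a b (p x)) (cl a b (p y)) \<le> 1 * dist x y"
      using lipschitz_onD[OF assms(1), of x y] by simp
  qed simp
  moreover have "\<bar>cl a b (p x)\<bar> \<le> \<bar>a\<bar> + \<bar>b\<bar>" for x unfolding cl_def by auto
  ultimately show ?thesis unfolding good_def by blast
qed

lemma lip_fst: "1-lipschitz_on UNIV (fst :: real \<times> real \<times> real \<Rightarrow> real)"
  by (rule lipschitz_onI) (auto simp: dist_fst_le)
lemma lip_fst_snd: "1-lipschitz_on UNIV (\<lambda>u :: real \<times> real \<times> real. fst (snd u))"
proof (rule lipschitz_onI)
  fix x y :: "real \<times> real \<times> real"
  have "dist (fst (snd x)) (fst (snd y)) \<le> dist (snd x) (snd y)" by (rule dist_fst_le)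
  also have "\<dots> \<le> dist x y" by (rule dist_snd_le)
  finally show "dist (fst (snd x)) (fst (snd y)) \<le> 1 * dist x y" by simp
qed simp
lemma lip_snd_snd: "1-lipschitz_on UNIV (\<lambda>u :: real \<times> real \<times> real. snd (snd u))"
proof (rule lipschitz_onI)
  fix x y :: "real \<times> real \<times> real"
  have "dist (snd (snd x)) (snd (snd y)) \<le> dist (snd x) (snd y)" by (rule dist_snd_le)
  also have "\<dots> \<le> dist x y" by (rule dist_snd_le)
  finally show "dist (snd (snd x)) (snd (snd y)) \<le> 1 * dist x y" by simp
qed simp

lemma good_ric:
  assumes "good f" "good g" "good k" "a > 0" "\<And>x. f x \<ge> a" "\<And>x. g x \<ge> a" "\<And>x. k x \<ge> a"
  shows "good (\<lambda>x. ric d (f x) (g x) (k x))"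
proof -
  have pos: "2 * f x * g x * k x \<ge> 2 * a * a * a" for x
    using assms(4) assms(5-7)[of x] by (intro mult_mono mult_right_mono) auto
  have e: "ric d (f x) (g x) (k x) =
     (real d * f x * f x - real d * g x * g x - real d * k x * k x + (10 * real d - 8) * g x * k x)
      * inverse (2 * f x * g x * k x)" for x
    by (simp only: ric_def divide_inverse power2_eq_square mult.assoc)
  have n: "good (\<lambda>x. real d * f x * f x - real d * g x * g x - real d * k x * k x + (10 * real d - 8) * g x * k x)"
    using good_add[OF good_diff[OF good_diff[OF good_mult[OF good_mult[OF good_const assms(1)] assms(1)]
        good_mult[OF good_mult[OF good_const assms(2)] assms(2)]] good_mult[OF good_mult[OF good_const assms(3)] assms(3)]]
        good_mult[OF good_mult[OF good_const assms(2)] assms(3)]] .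
  have m: "good (\<lambda>x. 2 * f x * g x * k x)"
    using good_mult[OF good_mult[OF good_mult[OF good_const assms(1)] assms(2)] assms(3)] .
  have i: "good (\<lambda>x. inverse (2 * f x * g x * k x))"
    by (rule good_inverse[OF m, of "2*a*a*a"]) (use assms(4) pos in auto)
  have fe: "(\<lambda>x. ric d (f x) (g x) (k x)) = (\<lambda>x. (real d * f x * f x - real d * g x * g x - real d * k x * k x + (10 * real d - 8) * g x * k x)
      * inverse (2 * f x * g x * k x))"
    using e by (intro ext)
  show ?thesis unfolding fe using good_mult[OF n i] .
qed



definition Nf :: "nat \<Rightarrow> real \<Rightarrow> real \<Rightarrow> real \<Rightarrow> real" where
  "Nf d a b c = real d * a^2 - real d * b^2 - real d * c^2 + (10 * real d - 8) * b * c"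

lemma ric_Nf: "a > 0 \<Longrightarrow> b > 0 \<Longrightarrow> c > 0 \<Longrightarrow> a * ric d a b c = Nf d a b c / (2*b*c)"
  unfolding ric_def Nf_def by (simp add: field_simps)

lemma coeff_pos: "a > 0 \<Longrightarrow> b > 0 \<Longrightarrow> c > 0 \<Longrightarrow> Nf d a b c > 0 \<Longrightarrow> a * ric d a b c > 0"
  by (simp add: ric_Nf)
lemma coeff_neg: "a > 0 \<Longrightarrow> b > 0 \<Longrightarrow> c > 0 \<Longrightarrow> Nf d a b c < 0 \<Longrightarrow> a * ric d a b c < 0"
  by (simp add: ric_Nf divide_neg_pos)

lemma comp_derivs:
  fixes y :: "real \<Rightarrow> real \<times> real \<times> real"
  assumes "(y has_vector_derivative D) F"
  shows "((\<lambda>t. fst (y t)) has_real_derivative fst D) F"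
    "((\<lambda>t. fst (snd (y t))) has_real_derivative fst (snd D)) F"
    "((\<lambda>t. snd (snd (y t))) has_real_derivative snd (snd D)) F"
  using has_derivative_fst[OF assms[unfolded has_vector_derivative_def]]
    has_derivative_fst[OF has_derivative_snd[OF assms[unfolded has_vector_derivative_def]]]
    has_derivative_snd[OF has_derivative_snd[OF assms[unfolded has_vector_derivative_def]]]
  by (simp_all add: has_real_derivative_iff_has_vector_derivative has_vector_derivative_def)

lemma main:
  fixes d :: nat and p1 p2 p3 :: real
  assumes p: "p1 > 0" "p2 > 0" "p3 > 0"
    and n1: "Nf d p1 p2 p3 > 0" and n2: "Nf d p2 p1 p3 > 0" and n3: "Nf d p3 p1 p2 = 0"
    and D: "2 * real d * p3 * (-2 * ric d p3 p1 p2 * p3) - 2 * real d * p1 * (-2 * ric d p1 p2 p3 * p1)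
            - 2 * real d * p2 * (-2 * ric d p2 p1 p3 * p2)
            + (10 * real d - 8) * ((-2 * ric d p1 p2 p3 * p1) * p2 + p1 * (-2 * ric d p2 p1 p3 * p2)) < 0"
  shows "\<exists>x1 x2 x3 :: real \<Rightarrow> real. \<exists>T > 0.
           ricci_flow_sol d x1 x2 x3 T \<and>
           ricci_pos_def d (x1 0) (x2 0) (x3 0) \<and>
           ricci_signature d (x1 T) (x2 T) (x3 T) = (d, 2 * d)"
proof -
  define a where "a = min p1 (min p2 p3) / 2"
  define b where "b = 2 * max p1 (max p2 p3)"
  have a0: "a > 0" and ab: "a \<le> b" and pa: "a < p1" "a < p2" "a < p3" and pb: "p1 < b" "p2 < b" "p3 < b"
    using p by (auto simp: a_def b_def)
  define P1 where "P1 = (\<lambda>u::real\<times>real\<times>real. cl a b (fst u))"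
  define P2 where "P2 = (\<lambda>u::real\<times>real\<times>real. cl a b (fst (snd u)))"
  define P3 where "P3 = (\<lambda>u::real\<times>real\<times>real. cl a b (snd (snd u)))"
  have Pge: "P1 u \<ge> a" "P2 u \<ge> a" "P3 u \<ge> a" for u by (auto simp: P1_def P2_def P3_def cl_def)
  have gP: "good P1" "good P2" "good P3" unfolding P1_def P2_def P3_def
    by (rule good_cl[OF lip_fst ab] good_cl[OF lip_fst_snd ab] good_cl[OF lip_snd_snd ab])+
  define g1 where "g1 = (\<lambda>u. -2 * ric d (P1 u) (P2 u) (P3 u) * P1 u)"
  define g2 where "g2 = (\<lambda>u. -2 * ric d (P2 u) (P1 u) (P3 u) * P2 u)"
  define g3 where "g3 = (\<lambda>u. -2 * ric d (P3 u) (P1 u) (P2 u) * P3 u)"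
  have gg: "good g1" "good g2" "good g3" unfolding g1_def g2_def g3_def
    by (intro good_mult good_const good_ric[where a=a] gP Pge a0)+
  obtain L1 L2 L3 where L: "L1-lipschitz_on UNIV g1" "L2-lipschitz_on UNIV g2" "L3-lipschitz_on UNIV g3"
    using gg unfolding good_def by blast
  define G where "G = (\<lambda>u. (g1 u, g2 u, g3 u))"
  obtain L where lip: "L-lipschitz_on UNIV G"
    using lipschitz_on_Pair[OF L(1) lipschitz_on_Pair[OF L(2) L(3)]] unfolding G_def by blast
  have L0: "L \<ge> 0" using lip lipschitz_on_nonneg by blast
  define h where "h = 1 / (8 * (L + 1))"
  have h0: "h > 0" using L0 by (simp add: h_def)
  have hL: "4 * h * L < 1" using L0 by (simp add: h_def field_simps)
  obtain y where y0: "y 0 = (p1, p2, p3)"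
    and yd: "\<forall>t\<in>{-h..h}. (y has_vector_derivative G (y t)) (at t within {-h..h})"
    using picard[OF lip h0 hL] by blast
  have yat: "(y has_vector_derivative G (y t)) (at t)" if "-h < t" "t < h" for t
  proof -
    have "(y has_vector_derivative G (y t)) (at t within {-h<..<h})"
      by (rule has_vector_derivative_within_subset[OF yd[rule_format]]) (use that in auto)
    then show ?thesis using at_within_open[of t "{-h<..<h}"] that by auto
  qed
  have cont0: "isCont y 0" using yat[of 0] h0 has_vector_derivative_continuous by auto
  define U where "U = {u :: real\<times>real\<times>real. a < fst u \<and> fst u < b \<and> a < fst (snd u) \<and> fst (snd u) < b
      \<and> a < snd (snd u) \<and> snd (snd u) < b
      \<and> 0 < Nf d (fst u) (fst (snd u)) (snd (snd u)) \<and> 0 < Nf d (fst (snd u)) (fst u) (snd (snd u))}"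
  have oU: "open U" unfolding U_def Nf_def
    by (intro open_Collect_conj open_Collect_less continuous_intros)
  have pU: "(p1, p2, p3) \<in> U" using pa pb n1 n2 by (simp add: U_def)
  have "\<forall>\<^sub>F t in at 0. y t \<in> U"
    using topological_tendstoD[OF cont0[unfolded isCont_def] oU] pU y0 by simp
  then obtain \<delta> where \<delta>0: "\<delta> > 0" and \<delta>U: "\<And>t. t \<noteq> 0 \<Longrightarrow> \<bar>t\<bar> < \<delta> \<Longrightarrow> y t \<in> U"
    unfolding eventually_at by (auto simp: dist_real_def)
  have yU: "\<bar>t\<bar> < \<delta> \<Longrightarrow> y t \<in> U" for t using \<delta>U[of t] y0 pU by (cases "t = 0") auto
  have GU: "G u = (-2 * ric d (fst u) (fst (snd u)) (snd (snd u)) * fst u,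
                   -2 * ric d (fst (snd u)) (fst u) (snd (snd u)) * fst (snd u),
                   -2 * ric d (snd (snd u)) (fst u) (fst (snd u)) * snd (snd u))" if "u \<in> U" for u
    using that by (simp add: U_def G_def g1_def g2_def g3_def P1_def P2_def P3_def cl_def)
  define g where "g = (\<lambda>t. Nf d (snd (snd (y t))) (fst (y t)) (fst (snd (y t))))"
  have Gp: "G (y 0) = (-2 * ric d p1 p2 p3 * p1, -2 * ric d p2 p1 p3 * p2, -2 * ric d p3 p1 p2 * p3)"
    using GU[OF pU] y0 by simp
  have zd: "((\<lambda>t. fst (y t)) has_real_derivative (-2 * ric d p1 p2 p3 * p1)) (at 0)"
     "((\<lambda>t. fst (snd (y t))) has_real_derivative (-2 * ric d p2 p1 p3 * p2)) (at 0)"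
     "((\<lambda>t. snd (snd (y t))) has_real_derivative (-2 * ric d p3 p1 p2 * p3)) (at 0)"
    using comp_derivs[OF yat[of 0]] h0 Gp by auto
  have gd: "(g has_real_derivative
      (2 * real d * p3 * (-2 * ric d p3 p1 p2 * p3) - 2 * real d * p1 * (-2 * ric d p1 p2 p3 * p1)
            - 2 * real d * p2 * (-2 * ric d p2 p1 p3 * p2)
            + (10 * real d - 8) * ((-2 * ric d p1 p2 p3 * p1) * p2 + p1 * (-2 * ric d p2 p1 p3 * p2)))) (at 0)"
    unfolding g_def Nf_def
    by (rule derivative_eq_intros zd refl)+ (simp add: y0 algebra_simps)
  have g00: "g 0 = 0" using n3 y0 by (simp add: g_def)
  obtain d1 where d1: "d1 > 0" "\<And>t. t > 0 \<Longrightarrow> t < d1 \<Longrightarrow> g t < 0"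
    using DERIV_neg_dec_right[OF gd D] g00 by auto
  obtain d2 where d2: "d2 > 0" "\<And>t. t > 0 \<Longrightarrow> t < d2 \<Longrightarrow> g (- t) > 0"
    using DERIV_neg_dec_left[OF gd D] g00 by auto
  define s where "s = min (min d1 d2) (min \<delta> h) / 2"
  have s0: "s > 0" and sd: "s < d1" "s < d2" "s < \<delta>" "s < h"
    using d1 d2 \<delta>0 h0 by (auto simp: s_def)
  define x1 where "x1 = (\<lambda>t. fst (y (t - s)))"
  define x2 where "x2 = (\<lambda>t. fst (snd (y (t - s))))"
  define x3 where "x3 = (\<lambda>t. snd (snd (y (t - s))))"
  define T where "T = 2 * s"
  have inU: "y (t - s) \<in> U" if "t \<in> {0..T}" for t
    using that sd by (intro yU) (auto simp: T_def)
  have flow: "ricci_flow_sol d x1 x2 x3 T"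
    unfolding ricci_flow_sol_def
  proof (intro ballI conjI)
    fix t assume t: "t \<in> {0..T}"
    have U: "y (t - s) \<in> U" by (rule inU[OF t])
    then show "x1 t > 0" "x2 t > 0" "x3 t > 0" using a0 by (auto simp: U_def x1_def x2_def x3_def)
    have sh: "((\<lambda>t. t - s) has_vector_derivative 1) (at t)"
      by (auto intro!: derivative_eq_intros)
    have "-h < t - s" "t - s < h" using t sd by (auto simp: T_def)
    then have "((y \<circ> (\<lambda>t. t - s)) has_vector_derivative (1 *\<^sub>R G (y (t - s)))) (at t)"
      using vector_diff_chain_at[OF sh yat] by simp
    then have yv: "((\<lambda>t. y (t - s)) has_vector_derivative G (y (t - s))) (at t)"
      by (simp add: o_def)
    note cd = comp_derivs[OF yv]
    show "(x1 has_real_derivative (-2 * ric d (x1 t) (x2 t) (x3 t) * x1 t)) (at t within {0..T})"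
      using cd(1) GU[OF U] unfolding x1_def x2_def x3_def by (auto intro: has_field_derivative_at_within)
    show "(x2 has_real_derivative (-2 * ric d (x2 t) (x1 t) (x3 t) * x2 t)) (at t within {0..T})"
      using cd(2) GU[OF U] unfolding x1_def x2_def x3_def by (auto intro: has_field_derivative_at_within)
    show "(x3 has_real_derivative (-2 * ric d (x3 t) (x1 t) (x2 t) * x3 t)) (at t within {0..T})"
      using cd(3) GU[OF U] unfolding x1_def x2_def x3_def by (auto intro: has_field_derivative_at_within)
  qed
  have T0: "0 \<in> {0..T}" and TT: "T \<in> {0..T}" using s0 by (auto simp: T_def)
  have U0: "y (-s) \<in> U" using inU[OF T0] by simp
  have UT: "y s \<in> U" using inU[OF TT] by (simp add: T_def)
  have g0: "g (-s) > 0" using d2(2)[OF s0 sd(2)] .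
  have gT: "g s < 0" using d1(2)[OF s0 sd(1)] .
  have pos0: "ricci_pos_def d (x1 0) (x2 0) (x3 0)"
    using U0 g0 a0 unfolding ricci_pos_def_def ricci_coeffs_def x1_def x2_def x3_def g_def U_def
    by (auto intro!: coeff_pos)
  have c1: "x1 T * ric d (x1 T) (x2 T) (x3 T) > 0" "x2 T * ric d (x2 T) (x1 T) (x3 T) > 0"
     "x3 T * ric d (x3 T) (x1 T) (x2 T) < 0"
    using UT gT a0 unfolding x1_def x2_def x3_def g_def U_def T_def
    by (auto intro!: coeff_pos coeff_neg)
  have sig: "ricci_signature d (x1 T) (x2 T) (x3 T) = (d, 2 * d)"
    using c1 unfolding ricci_signature_def ricci_coeffs_def by simp
  show ?thesis
    using flow pos0 sig s0 by (intro exI[of _ x1] exI[of _ x2] exI[of _ x3] exI[of _ T]) (auto simp: T_def)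
qed


theorem theorem4p1:
  fixes d :: nat
  assumes "d \<in> {2, 4, 8}"
  shows "\<exists>x1 x2 x3 :: real \<Rightarrow> real. \<exists>T > 0.
           ricci_flow_sol d x1 x2 x3 T \<and>
           ricci_pos_def d (x1 0) (x2 0) (x3 0) \<and>
           ricci_signature d (x1 T) (x2 T) (x3 T) = (d, 2 * d)"
proof -
  have "d = 2 \<or> d = 4 \<or> d = 8" using assms by auto
  then show ?thesis
  proof (elim disjE)
    assume "d = 2"
    show ?thesis unfolding \<open>d = 2\<close>
      by (rule main[of 3 28 17 2]) (simp_all add: Nf_def ric_def)
  next
    assume "d = 4"
    show ?thesis unfolding \<open>d = 4\<close>
      by (rule main[of 1 12 7 4]) (simp_all add: Nf_def ric_def)
  next
    assume "d = 8"
    show ?thesis unfolding \<open>d = 8\<close>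
      by (rule main[of 1 24 19 8]) (simp_all add: Nf_def ric_def)
  qed
qed

end
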